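(* Let $p$ be a prime and let $E$ be an elementary abelian $p$-group of rank at least $2$. Then for every $z\in E$, $$\sum_{\substack{Z\le E\\ z\in Z}}\frac{\mu(\mathbf{1},Z)}{|Z|}=0,$$ where the sum runs over subgroups $Z$ of $E$ containing $z$.
   Context: $\mu$ denotes the Möbius function of the poset of subgroups of $E$ ordered by inclusion, and $\mathbf{1}$ is the trivial subgroup. *)

theory Defs
  imports "HOL-Algebra.Algebra"
begin

function subgroup_mobius :: "('a, 'b) monoid_scheme \<Rightarrow> 'a set \<Rightarrow> 'a set \<Rightarrow> int" where
  "subgroup_mobius G H K =
     (if finite K \<and> subgroup H G \<and> subgroup K G \<and> H \<subseteq> K then
        (if H = K then 1
         else - (\<Sum>L \<in> {L. subgroup L G \<and> H \<subseteq> L \<and> L \<subset> K}. subgroup_mobius G H L))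
      else 0)"
  by pat_completeness auto
termination
  by (relation "measure (\<lambda>(G, H, K). card K)") (auto intro: psubset_card_mono)

definition elementary_abelian :: "('a, 'b) monoid_scheme \<Rightarrow> nat \<Rightarrow> nat \<Rightarrow> bool" where
  "elementary_abelian G p r \<longleftrightarrow>
     comm_group G \<and> finite (carrier G) \<and> (\<forall>x \<in> carrier G. x [^]\<^bsub>G\<^esub> p = \<one>\<^bsub>G\<^esub>)
     \<and> card (carrier G) = p ^ r"

end

theory Submission
  imports Defs
begin

locale EAz = comm_group G for G (structure) +
  fixes z :: 'a and p :: nat
  assumes z: "z \<in> carrier G" and zne: "z \<noteq> \<one>" and zp: "z [^] p = \<one>"
    and pp: "Factorial_Ring.prime p" and fin: "finite (carrier G)"
begin

lemma p1: "p \<ge> 1" using pp prime_gt_0_nat by (simp add: Suc_leI)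

lemma zpi: "z [^] (p * (i::nat)) = \<one>"
proof -
  have "z [^] (p * i) = (z [^] p) [^] i" using z nat_pow_pow[of z p i] by simp
  then show ?thesis using zp by simp
qed

lemma zpow_inv: "inv (z [^] (i::nat)) = z [^] (i * (p - 1))"
proof (rule inv_equality)
  have "z [^] (i * (p - 1)) \<otimes> z [^] i = z [^] (i * (p - 1) + i)" using z nat_pow_mult by blast
  also have "i * (p - 1) + i = p * i" using p1
    by (simp add: algebra_simps)
  finally show "z [^] (i * (p - 1)) \<otimes> z [^] i = \<one>" using zpi[of i] by (rule trans)
next
  show "z [^] i \<in> carrier G" using z by (rule nat_pow_closed)
next
  show "z [^] (i * (p - 1)) \<in> carrier G" using z by (rule nat_pow_closed)
qed

definition J :: "'a set \<Rightarrow> 'a set" where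
  "J x = {h \<otimes> z [^] (i::nat) | h i. h \<in> x}"

lemma J_subgroup: assumes "subgroup x G" shows "subgroup (J x) G"
proof (rule subgroupI)
  interpret H: subgroup x G by fact
  show "J x \<subseteq> carrier G" using z by (auto simp: J_def)
  have "\<one> \<otimes> z [^] (0::nat) \<in> J x" unfolding J_def using H.one_closed by blast
  then show "J x \<noteq> {}" by blast
  fix a assume "a \<in> J x"
  then obtain h i where a: "a = h \<otimes> z [^] (i::nat)" "h \<in> x" unfolding J_def by blast
  have hc: "h \<in> carrier G" using a by auto
  have "inv a = inv h \<otimes> inv (z [^] i)" unfolding a(1) using hc z by (simp add: inv_mult)
  also have "\<dots> = inv h \<otimes> z [^] (i * (p - 1))" by (simp only: zpow_inv)
  finally show "inv a \<in> J x" using a unfolding J_def by blast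
next
  interpret H: subgroup x G by fact
  fix a b assume "a \<in> J x" "b \<in> J x"
  then obtain h i h' j where a: "a = h \<otimes> z [^] (i::nat)" "h \<in> x"
    and b: "b = h' \<otimes> z [^] (j::nat)" "h' \<in> x" unfolding J_def by blast
  have hc: "h \<in> carrier G" "h' \<in> carrier G" using a b by auto
  have zc: "z [^] i \<in> carrier G" "z [^] j \<in> carrier G" using z by auto
  have "a \<otimes> b = (h \<otimes> h') \<otimes> (z [^] i \<otimes> z [^] j)"
    unfolding a(1) b(1) using hc zc by (simp add: m_ac)
  also have "\<dots> = (h \<otimes> h') \<otimes> z [^] (i + j)" using z nat_pow_mult by simp
  finally show "a \<otimes> b \<in> J x" using a b unfolding J_def by blast
qed

lemma J_sup: assumes "subgroup x G" shows "x \<subseteq> J x" "z \<in> J x"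
proof -
  interpret H: subgroup x G by fact
  show "x \<subseteq> J x" unfolding J_def
  proof
    fix h assume "h \<in> x"
    then have "h = h \<otimes> z [^] (0::nat)" by simp
    then show "h \<in> {h \<otimes> z [^] (i::nat) | h i. h \<in> x}" using \<open>h \<in> x\<close> by blast
  qed
  have "z = \<one> \<otimes> z [^] (1::nat)" using z by simp
  then show "z \<in> J x" unfolding J_def using H.one_closed by blast
qed

lemma J_min: assumes "subgroup K G" "x \<subseteq> K" "z \<in> K" shows "J x \<subseteq> K"
proof
  interpret H: subgroup K G by fact
  fix a assume "a \<in> J x"
  then obtain h i where a: "a = h \<otimes> z [^] (i::nat)" "h \<in> x" unfolding J_def by blast
  have "z [^] i \<in> K"
  proof (induction i)
    case 0 then show ?case using H.one_closed by simp
  next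
    case (Suc i) then show ?case using assms(3) H.m_closed nat_pow_Suc by metis
  qed
  then show "a \<in> K" using a assms(2) by auto
qed

lemma sub_pow: assumes "subgroup K G" "a \<in> K" shows "a [^] (n::nat) \<in> K"
proof (induction n)
  case 0 then show ?case using subgroup.one_closed[OF assms(1)] by simp
next
  case (Suc n) then show ?case using assms subgroup.m_closed nat_pow_Suc by metis
qed

lemma J_self: assumes "subgroup x G" "z \<in> x" shows "J x = x"
  using J_min[OF assms(1) _ assms(2)] J_sup(1)[OF assms(1)] by blast

lemma zmod: "z [^] (i::nat) = z [^] (i mod p)"
proof -
  have "z [^] i = z [^] (p * (i div p) + i mod p)" by simp
  also have "\<dots> = z [^] (p * (i div p)) \<otimes> z [^] (i mod p)" using z nat_pow_mult by simp
  also have "\<dots> = z [^] (i mod p)" using zpi z by simp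
  finally show ?thesis .
qed

lemma J_inj_aux:
  assumes x: "subgroup x G" "z \<notin> x" and h: "h \<in> x" "h' \<in> x" and ij: "i \<le> j" "j < p"
    and eq: "h \<otimes> z [^] i = h' \<otimes> z [^] j"
  shows "h = h' \<and> i = j"
proof -
  interpret H: subgroup x G by fact
  have hc: "h \<in> carrier G" "h' \<in> carrier G" using h by auto
  define d where "d = j - i"
  have jd: "j = d + i" using ij d_def by simp
  have "z [^] j = z [^] d \<otimes> z [^] i" using z nat_pow_mult jd by simp
  then have "h \<otimes> z [^] i = (h' \<otimes> z [^] d) \<otimes> z [^] i" using eq hc z by (simp add: m_assoc)
  then have hh: "h = h' \<otimes> z [^] d" using hc z by simp
  show ?thesis
  proof (cases "d = 0")
    case True then show ?thesis using hh hc jd by simp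
  next
    case False
    have zd: "z [^] d = inv h' \<otimes> h" using hh hc z
      by (simp add: m_assoc[symmetric])
    have zdx: "z [^] d \<in> x" unfolding zd using h by simp
    have "\<not> p dvd d" using False ij d_def by (auto dest: dvd_imp_le)
    then have "coprime p d" using pp prime_imp_coprime by blast
    then have "gcd d p = 1" by (simp add: coprime_iff_gcd_eq_1 gcd.commute)
    then obtain k y where ky: "d * k = p * y + 1" using bezout_nat[OF False, of p] by auto
    have "(z [^] d) [^] k \<in> x" using sub_pow[OF x(1) zdx] .
    also have "(z [^] d) [^] k = z [^] (p * y + 1)" using z nat_pow_pow ky by simp
    also have "\<dots> = z" using z zpi nat_pow_mult[of z "p*y" 1, symmetric] by simp
    finally show ?thesis using x(2) by simp
  qed
qed

lemma J_card: assumes x: "subgroup x G" "z \<notin> x" shows "card (J x) = p * card x"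
proof -
  interpret H: subgroup x G by fact
  let ?f = "\<lambda>(h, i). h \<otimes> z [^] (i::nat)"
  have img: "J x = ?f ` (x \<times> {..<p})"
  proof
    show "J x \<subseteq> ?f ` (x \<times> {..<p})"
    proof
      fix a assume "a \<in> J x"
      then obtain h i where a: "a = h \<otimes> z [^] (i::nat)" "h \<in> x" unfolding J_def by blast
      have "i mod p < p" using pp prime_gt_0_nat by simp
      moreover have "a = ?f (h, i mod p)" using a zmod by simp
      ultimately show "a \<in> ?f ` (x \<times> {..<p})" using a(2) by blast
    qed
    show "?f ` (x \<times> {..<p}) \<subseteq> J x" unfolding J_def by auto
  qed
  have inj: "inj_on ?f (x \<times> {..<p})"
  proof (rule inj_onI, clarify)
    fix h i h' j assume h: "h \<in> x" "h' \<in> x" and ij: "i < p" "j < p"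
      and eq: "h \<otimes> z [^] i = h' \<otimes> z [^] j"
    show "h = h' \<and> i = j"
    proof (cases "i \<le> j")
      case True then show ?thesis using J_inj_aux[OF x h True ij(2) eq] by blast
    next
      case False then show ?thesis using J_inj_aux[OF x h(2) h(1) _ ij(1) eq[symmetric]] by auto
    qed
  qed
  have "card (J x) = card (x \<times> {..<p})" unfolding img using inj by (rule card_image)
  then show ?thesis by (simp add: card_cartesian_product)
qed

abbreviation mu :: "'a set \<Rightarrow> int" where "mu L \<equiv> subgroup_mobius G {\<one>} L"

lemma finite_SG: "finite {L. subgroup L G \<and> P L}"
  by (rule finite_subset[of _ "Pow (carrier G)"]) (auto dest: subgroup.subset simp: fin)

lemma sub_fin: "subgroup K G \<Longrightarrow> finite K"
  using fin finite_subset subgroup.subset by blast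

lemma mob_rec: assumes K: "subgroup K G" "K \<noteq> {\<one>}"
  shows "(\<Sum>L\<in>{L. subgroup L G \<and> L \<subseteq> K}. mu L) = 0"
proof -
  let ?A = "{L. subgroup L G \<and> {\<one>} \<subseteq> L \<and> L \<subset> K}"
  have one: "{\<one>} \<subseteq> K" using subgroup.one_closed[OF K(1)] by simp
  have "mu K = - (\<Sum>L\<in>?A. mu L)"
    by (subst subgroup_mobius.simps) (use K one sub_fin triv_subgroup in auto)
  moreover have "{L. subgroup L G \<and> L \<subseteq> K} = insert K ?A"
    using K(1) subgroup.one_closed by fastforce
  moreover have "finite ?A" using finite_SG[of "\<lambda>L. {\<one>} \<subseteq> L \<and> L \<subset> K"] by simp
  ultimately show ?thesis by simp
qed

definition W :: "'a set \<Rightarrow> int" where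
  "W K = (\<Sum>x\<in>{x. subgroup x G \<and> J x = K}. mu x)"

lemma weisner: "subgroup K G \<Longrightarrow> z \<in> K \<Longrightarrow> W K = 0"
proof (induction "card K" arbitrary: K rule: less_induct)
  case less
  let ?A = "{K'. subgroup K' G \<and> z \<in> K' \<and> K' \<subseteq> K}"
  let ?S = "{x. subgroup x G \<and> x \<subseteq> K}"
  have finA: "finite ?A" using finite_SG[of "\<lambda>K'. z \<in> K' \<and> K' \<subseteq> K"] by simp
  have finS: "finite ?S" using finite_SG[of "\<lambda>x. x \<subseteq> K"] by simp
  have img: "J ` ?S \<subseteq> ?A" using J_subgroup J_sup J_min less.prems by blast
  have "(\<Sum>K'\<in>?A. W K') = (\<Sum>K'\<in>?A. (\<Sum>x\<in>{x. x \<in> ?S \<and> J x = K'}. mu x))"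
  proof (rule sum.cong[OF refl])
    fix K' assume "K' \<in> ?A"
    then have "{x. x \<in> ?S \<and> J x = K'} = {x. subgroup x G \<and> J x = K'}"
      using J_sup by blast
    then show "W K' = (\<Sum>x\<in>{x. x \<in> ?S \<and> J x = K'}. mu x)" by (simp add: W_def)
  qed
  also have "\<dots> = (\<Sum>x\<in>?S. mu x)" by (rule sum.group[OF finS finA img])
  also have "\<dots> = 0" using mob_rec[OF less.prems(1)] less.prems zne by blast
  finally have tot: "(\<Sum>K'\<in>?A. W K') = 0" .
  have "(\<Sum>K'\<in>?A - {K}. W K') = 0"
  proof (rule sum.neutral, rule ballI)
    fix K' assume "K' \<in> ?A - {K}"
    then have K': "subgroup K' G" "z \<in> K'" "K' \<subseteq> K" "K' \<noteq> K" by auto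
    have "card K' < card K" using K' sub_fin[OF less.prems(1)] by (simp add: psubset_card_mono)
    then show "W K' = 0" using less.hyps K' by blast
  qed
  moreover have "K \<in> ?A" using less.prems by blast
  ultimately show ?case using tot sum.remove[OF finA, of K W] by simp
qed

lemma U_eq:
  "(\<Sum>x\<in>{x. subgroup x G \<and> z \<notin> x}. real_of_int (mu x) / real (card x))
   = - real p * (\<Sum>K\<in>{K. subgroup K G \<and> z \<in> K}. real_of_int (mu K) / real (card K))"
proof -
  let ?Sx = "{x. subgroup x G \<and> z \<notin> x}"
  let ?A = "{K. subgroup K G \<and> z \<in> K}"
  let ?f = "\<lambda>x. real_of_int (mu x) / real (card x)"
  have finSx: "finite ?Sx" using finite_SG[of "\<lambda>x. z \<notin> x"] by simp
  have finA: "finite ?A" using finite_SG[of "\<lambda>x. z \<in> x"] by simp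
  have img: "J ` ?Sx \<subseteq> ?A" using J_subgroup J_sup by blast
  have "(\<Sum>x\<in>?Sx. ?f x) = (\<Sum>K\<in>?A. \<Sum>x\<in>{x. x \<in> ?Sx \<and> J x = K}. ?f x)"
    by (rule sum.group[OF finSx finA img, symmetric])
  also have "\<dots> = (\<Sum>K\<in>?A. - real p * ?f K)"
  proof (rule sum.cong[OF refl])
    fix K assume KA: "K \<in> ?A"
    let ?B = "{x. x \<in> ?Sx \<and> J x = K}"
    have finB: "finite ?B" by (rule finite_subset[OF _ finSx]) blast
    have cardK: "card K > 0" using KA sub_fin by (auto simp: card_gt_0_iff)
    have "(\<Sum>x\<in>?B. ?f x) = (\<Sum>x\<in>?B. real p / real (card K) * real_of_int (mu x))"
    proof (rule sum.cong[OF refl])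
      fix x assume "x \<in> ?B"
      then have x: "subgroup x G" "z \<notin> x" "J x = K" by auto
      have "card K = p * card x" using J_card[OF x(1,2)] x(3) by simp
      moreover have "p > 0" using pp prime_gt_0_nat by simp
      ultimately show "?f x = real p / real (card K) * real_of_int (mu x)" by simp
    qed
    also have "\<dots> = real p / real (card K) * real_of_int (\<Sum>x\<in>?B. mu x)"
      by (simp add: sum_distrib_left)
    also have "(\<Sum>x\<in>?B. mu x) = - mu K"
    proof -
      have seteq: "{x. subgroup x G \<and> J x = K} = insert K ?B"
      proof
        show "{x. subgroup x G \<and> J x = K} \<subseteq> insert K ?B"
        proof
          fix x assume x: "x \<in> {x. subgroup x G \<and> J x = K}"
          show "x \<in> insert K ?B"
          proof (cases "z \<in> x")
            case True then have "x = K" using x J_self by auto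
            then show ?thesis by simp
          next
            case False then show ?thesis using x by simp
          qed
        qed
        have "J K = K" using KA J_self by simp
        then show "insert K ?B \<subseteq> {x. subgroup x G \<and> J x = K}" using KA by blast
      qed
      have "K \<notin> ?B" using KA by auto
      then have "W K = mu K + (\<Sum>x\<in>?B. mu x)" unfolding W_def seteq using finB by simp
      then show ?thesis using weisner KA by simp
    qed
    finally show "(\<Sum>x\<in>?B. ?f x) = - real p * ?f K" by simp
  qed
  also have "\<dots> = - real p * (\<Sum>K\<in>?A. ?f K)" by (simp add: sum_distrib_left)
  finally show ?thesis .
qed

lemma S_eq:
  "(1 - real p) * (\<Sum>K\<in>{K. subgroup K G \<and> z \<in> K}. real_of_int (mu K) / real (card K))
   = (\<Sum>K\<in>{K. subgroup K G}. real_of_int (mu K) / real (card K))"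
proof -
  let ?f = "\<lambda>x. real_of_int (mu x) / real (card x)"
  let ?P = "{K. subgroup K G \<and> z \<in> K}" and ?N = "{K. subgroup K G \<and> z \<notin> K}"
  have un: "{K. subgroup K G} = ?P \<union> ?N" by blast
  have fP: "finite ?P" using finite_SG[of "\<lambda>x. z \<in> x"] by simp
  have fN: "finite ?N" using finite_SG[of "\<lambda>x. z \<notin> x"] by simp
  have dj: "?P \<inter> ?N = {}" by blast
  have "(\<Sum>K\<in>{K. subgroup K G}. ?f K) = sum ?f ?P + sum ?f ?N"
    unfolding un by (rule sum.union_disjoint[OF fP fN dj])
  also have "\<dots> = sum ?f ?P - real p * sum ?f ?P" using U_eq by simp
  finally show ?thesis by (simp add: algebra_simps)
qed

end

theorem lemma2p5:
  fixes E :: "('a, 'b) monoid_scheme" and p r :: nat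
  assumes "Factorial_Ring.prime p" and "elementary_abelian E p r" and "r \<ge> 2"
    and "z \<in> carrier E"
  shows "(\<Sum>Z \<in> {Z. subgroup Z E \<and> z \<in> Z}.
            real_of_int (subgroup_mobius E {\<one>\<^bsub>E\<^esub>} Z) / real (card Z)) = 0"
proof -
  note pp = assms(1)
  have cg: "comm_group E" and fin: "finite (carrier E)" and pw: "\<forall>x\<in>carrier E. x [^]\<^bsub>E\<^esub> p = \<one>\<^bsub>E\<^esub>"
    and cardE: "card (carrier E) = p ^ r" using assms(2) unfolding elementary_abelian_def by auto
  interpret comm_group E by (rule cg)
  let ?f = "\<lambda>Z. real_of_int (subgroup_mobius E {\<one>\<^bsub>E\<^esub>} Z) / real (card Z)"
  define S where "S w = (\<Sum>Z \<in> {Z. subgroup Z E \<and> w \<in> Z}. ?f Z)" for w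
  define T where "T = (\<Sum>Z \<in> {Z. subgroup Z E}. ?f Z)"
  have p2: "p \<ge> 2" using pp prime_ge_2_nat by blast
  have "p * p \<le> p ^ r"
  proof -
    have "p ^ 2 \<le> p ^ r" using assms(3) p2 by (intro power_increasing) auto
    then show ?thesis by (simp add: power2_eq_square)
  qed
  moreover have "p * 1 < p * p" using p2 by (intro mult_strict_left_mono) auto
  ultimately have ngt: "card (carrier E) > p" unfolding cardE by linarith
  have ex: "\<exists>z0 \<in> carrier E. z0 \<noteq> \<one>\<^bsub>E\<^esub>"
  proof (rule ccontr)
    assume "\<not> ?thesis"
    then have "carrier E \<subseteq> {\<one>\<^bsub>E\<^esub>}" by blast
    then have "card (carrier E) \<le> card {\<one>\<^bsub>E\<^esub>}" by (intro card_mono) auto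
    then have "card (carrier E) \<le> 1" by simp
    then show False using ngt p2 by simp
  qed
  have Sz: "(1 - real p) * S w = T" if "w \<in> carrier E" "w \<noteq> \<one>\<^bsub>E\<^esub>" for w
  proof -
    interpret EAz E w p by (intro EAz.intro cg EAz_axioms.intro) (use that pw pp fin in auto)
    show ?thesis unfolding S_def T_def by (rule S_eq)
  qed
  have S1: "S \<one>\<^bsub>E\<^esub> = T"
  proof -
    have "{Z. subgroup Z E \<and> \<one>\<^bsub>E\<^esub> \<in> Z} = {Z. subgroup Z E}" using subgroup.one_closed by blast
    then show ?thesis unfolding S_def T_def by simp
  qed
  obtain z0 where z0: "z0 \<in> carrier E" "z0 \<noteq> \<one>\<^bsub>E\<^esub>" using ex by blast
  interpret Z0: EAz E z0 p by (intro EAz.intro cg EAz_axioms.intro) (use z0 pw pp fin in auto)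
  have sumS: "(\<Sum>w\<in>carrier E. S w) = 0"
  proof -
    have "(\<Sum>w\<in>carrier E. S w) = (\<Sum>w\<in>carrier E. \<Sum>Z\<in>{Z. Z \<in> {Z. subgroup Z E} \<and> w \<in> Z}. ?f Z)"
      unfolding S_def by simp
    also have "\<dots> = (\<Sum>Z\<in>{Z. subgroup Z E}. \<Sum>w\<in>{w. w \<in> carrier E \<and> w \<in> Z}. ?f Z)"
      by (rule sum.swap_restrict[OF fin Z0.finite_SG[of "\<lambda>_. True", simplified]])
    also have "\<dots> = (\<Sum>Z\<in>{Z. subgroup Z E}. real_of_int (subgroup_mobius E {\<one>\<^bsub>E\<^esub>} Z))"
    proof (rule sum.cong[OF refl])
      fix Z assume "Z \<in> {Z. subgroup Z E}"
      then have Z: "subgroup Z E" by simp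
      have eq: "{w. w \<in> carrier E \<and> w \<in> Z} = Z" using subgroup.subset[OF Z] by blast
      have "card Z > 0" using Z Z0.sub_fin subgroup.one_closed[OF Z] card_gt_0_iff by blast
      then show "(\<Sum>w\<in>{w. w \<in> carrier E \<and> w \<in> Z}. ?f Z) = real_of_int (subgroup_mobius E {\<one>\<^bsub>E\<^esub>} Z)"
        unfolding eq by simp
    qed
    also have "\<dots> = real_of_int (\<Sum>Z\<in>{Z. subgroup Z E \<and> Z \<subseteq> carrier E}. subgroup_mobius E {\<one>\<^bsub>E\<^esub>} Z)"
    proof -
      have "{Z. subgroup Z E \<and> Z \<subseteq> carrier E} = {Z. subgroup Z E}" using subgroup.subset by blast
      then show ?thesis by (simp only: of_int_sum)
    qed
    also have "\<dots> = 0"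
    proof -
      have "carrier E \<noteq> {\<one>\<^bsub>E\<^esub>}" using z0 by blast
      then show ?thesis using Z0.mob_rec[OF subgroup_self] by simp
    qed
    finally show ?thesis .
  qed
  have p1: "1 - real p \<noteq> 0" using p2 by simp
  have "(\<Sum>w\<in>carrier E. S w) = S \<one>\<^bsub>E\<^esub> + (\<Sum>w\<in>carrier E - {\<one>\<^bsub>E\<^esub>}. S w)"
    using fin by (simp add: sum.remove)
  also have "(\<Sum>w\<in>carrier E - {\<one>\<^bsub>E\<^esub>}. S w) = (\<Sum>w\<in>carrier E - {\<one>\<^bsub>E\<^esub>}. T / (1 - real p))"
    using Sz p1 by (intro sum.cong) (auto simp: field_simps)
  also have "\<dots> = real (card (carrier E) - 1) * (T / (1 - real p))"
    using fin by (simp add: card_Diff_singleton)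
  finally have "0 = T + real (card (carrier E) - 1) * (T / (1 - real p))" using sumS S1 by simp
  then have "0 = T * (1 - real p) + real (card (carrier E) - 1) * T" using p1 by (simp add: field_simps)
  also have "real (card (carrier E) - 1) = real (card (carrier E)) - 1" using ngt by simp
  finally have "T * (real (card (carrier E)) - real p) = 0" by (simp add: algebra_simps) auto
  moreover have "real (card (carrier E)) - real p \<noteq> 0" using ngt by simp
  ultimately have T0: "T = 0" by simp
  show ?thesis
  proof (cases "z = \<one>\<^bsub>E\<^esub>")
    case True then show ?thesis using S1 T0 unfolding S_def by simp
  next
    case False then have "(1 - real p) * S z = 0" using Sz assms(4) T0 by simp
    then show ?thesis using p1 unfolding S_def by simp
  qed
qed

end
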